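(* For any POVM $\{\mathcal{M}_i\}_{i\in\mathcal{O}}$ on $\mathcal{H}$, \[2K^*(\{\mathcal{M}_i\}_{i\in\mathcal{O}})=\max_{|\psi\rangle\perp|\phi\rangle}\sum_{i\in\mathcal{O}}|\mathrm{tr}(\mathcal{M}_i(\psi-\phi))|,\] where the maximum is over pairs of unit vectors with $\langle\psi|\phi\rangle=0$, and $\psi=|\psi\rangle\langle\psi|$, $\phi=|\phi\rangle\langle\phi|$.
   Context: $\mathcal{H}$ is a finite-dimensional Hilbert space of dimension at least 2, $\mathcal{D}(\mathcal{H})$ its density matrices. A POVM is a finite family $\{\mathcal{M}_i\}_{i\in\mathcal{O}}$ of positive semidefinite matrices with $\sum_i\mathcal{M}_i=I$, and $K^*(\{\mathcal{M}_i\}_{i\in\mathcal{O}})=\max_{\rho,\sigma\in\mathcal{D}(\mathcal{H})}\frac12\sum_{i\in\mathcal{O}}|\mathrm{tr}(\mathcal{M}_i(\rho-\sigma))|$. *)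

theory Defs
  imports "HOL-Analysis.Analysis"
begin

text \<open>Matrices on H = C^n are represented as complex^'n^'n, with 'n a finite index type.\<close>

definition hermitian_mat :: "complex^'n^'n \<Rightarrow> bool" where
  "hermitian_mat A \<longleftrightarrow> (\<forall>i j. A $ i $ j = cnj (A $ j $ i))"

definition psd_mat :: "complex^'n^'n \<Rightarrow> bool" where
  "psd_mat A \<longleftrightarrow> hermitian_mat A \<and>
     (\<forall>v :: complex^'n. 0 \<le> Re (\<Sum>i\<in>UNIV. \<Sum>j\<in>UNIV. cnj (v $ i) * A $ i $ j * v $ j))"

definition density_mats :: "(complex^'n^'n) set" where
  "density_mats = {\<rho>. psd_mat \<rho> \<and> trace \<rho> = 1}"

definition is_POVM :: "'i set \<Rightarrow> ('i \<Rightarrow> complex^'n^'n) \<Rightarrow> bool" where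
  "is_POVM Obs M \<longleftrightarrow> finite Obs \<and> (\<forall>i\<in>Obs. psd_mat (M i)) \<and> (\<Sum>i\<in>Obs. M i) = mat 1"

definition Kstar :: "'i set \<Rightarrow> ('i \<Rightarrow> complex^'n^'n) \<Rightarrow> real" where
  "Kstar Obs M = (SUP p \<in> density_mats \<times> density_mats.
      (1/2) * (\<Sum>i\<in>Obs. cmod (trace (M i ** (fst p - snd p)))))"

text \<open>inner product <psi|phi>, linear in the second argument\<close>
definition braket :: "complex^'n \<Rightarrow> complex^'n \<Rightarrow> complex" where
  "braket \<psi> \<phi> = (\<Sum>i\<in>UNIV. cnj (\<psi> $ i) * \<phi> $ i)"

definition proj :: "complex^'n \<Rightarrow> complex^'n^'n" where
  "proj \<psi> = (\<chi> i j. \<psi> $ i * cnj (\<psi> $ j))"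

end

theory Submission
  imports Defs
begin

definition qf :: "complex^'n^'n \<Rightarrow> complex^'n \<Rightarrow> complex^'n \<Rightarrow> complex" where
  "qf A v w = (\<Sum>i\<in>UNIV. \<Sum>j\<in>UNIV. cnj (v $ i) * A $ i $ j * w $ j)"

definition tr2 :: "complex^'n^'n \<Rightarrow> complex^'n^'n \<Rightarrow> complex" where
  "tr2 A B = (\<Sum>i\<in>UNIV. \<Sum>j\<in>UNIV. A $ i $ j * B $ j $ i)"

definition linm :: "complex \<Rightarrow> complex^'n^'n \<Rightarrow> complex \<Rightarrow> complex^'n^'n" where
  "linm a A b = (\<chi> i j. a * A $ i $ j + (if i = j then b else 0))"

lemma trace_tr2: "trace (A ** B) = tr2 A B"
  by (simp add: trace_def matrix_matrix_mult_def tr2_def)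

lemma psd_qf: "psd_mat A \<longleftrightarrow> hermitian_mat A \<and> (\<forall>v. 0 \<le> Re (qf A v v))"
  by (simp add: psd_mat_def qf_def)

lemma norm_sq: "(norm (v::complex^'n))^2 = (\<Sum>i\<in>UNIV. (cmod (v$i))^2)"
  by (simp add: norm_vec_def L2_set_def sum_nonneg)

lemma braket_self: "braket v v = complex_of_real ((norm v)^2)"
proof -
  have "braket v v = (\<Sum>i\<in>UNIV. complex_of_real ((cmod (v$i))^2))"
    unfolding braket_def by (intro sum.cong refl) (metis complex_norm_square mult.commute)
  also have "\<dots> = complex_of_real ((norm v)^2)" by (simp add: norm_sq)
  finally show ?thesis .
qed

lemma braket_cnj: "cnj (braket v w) = braket w v"
  by (simp add: braket_def mult.commute)

lemma qf_herm: assumes "hermitian_mat A" shows "cnj (qf A v w) = qf A w v"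
proof -
  have h: "\<And>i j. cnj (A $ i $ j) = A $ j $ i" using assms unfolding hermitian_mat_def
    by (metis complex_cnj_cnj)
  have "cnj (qf A v w) = (\<Sum>i\<in>UNIV. \<Sum>j\<in>UNIV. v $ i * A $ j $ i * cnj (w $ j))"
    unfolding qf_def by (simp add: h)
  also have "\<dots> = qf A w v" unfolding qf_def
    by (subst sum.swap) (simp add: mult.commute mult.left_commute)
  finally show ?thesis .
qed

lemma qf_herm_real: assumes "hermitian_mat A" shows "Im (qf A v v) = 0"
proof -
  have "cnj (qf A v v) = qf A v v" by (rule qf_herm[OF assms])
  then have "Im (cnj (qf A v v)) = Im (qf A v v)" by simp
  then show ?thesis by simp
qed

lemma qf_linm: "qf (linm a A b) v w = a * qf A v w + b * braket v w"
proof -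
  have "qf (linm a A b) v w = (\<Sum>i\<in>UNIV. \<Sum>j\<in>UNIV. a * (cnj (v $ i) * A $ i $ j * w $ j)
        + (if i = j then b * (cnj (v $ i) * w $ j) else 0))"
    unfolding qf_def linm_def by (intro sum.cong refl) (auto simp: algebra_simps)
  also have "\<dots> = (\<Sum>i\<in>UNIV. a * (\<Sum>j\<in>UNIV. cnj (v $ i) * A $ i $ j * w $ j)
        + b * (cnj (v $ i) * w $ i))"
    by (simp only: sum.distrib sum_distrib_left[symmetric] sum.delta sum.delta' finite UNIV_I if_True)
  also have "\<dots> = a * qf A v w + b * braket v w"
    unfolding qf_def braket_def by (simp add: sum.distrib sum_distrib_left)
  finally show ?thesis .
qed

lemma qf_add1: "qf A (u + v) w = qf A u w + qf A v w"
  by (simp add: qf_def algebra_simps sum.distrib)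
lemma qf_add2: "qf A w (u + v) = qf A w u + qf A w v"
  by (simp add: qf_def algebra_simps sum.distrib)
lemma qf_diff1: "qf A (u - v) w = qf A u w - qf A v w"
  by (simp add: qf_def algebra_simps sum_subtractf)
lemma qf_diff2: "qf A w (u - v) = qf A w u - qf A w v"
  by (simp add: qf_def algebra_simps sum_subtractf)
lemma qf_smult1: "qf A (c *s u) w = cnj c * qf A u w"
  by (simp add: qf_def algebra_simps sum_distrib_left)
lemma qf_smult2: "qf A w (c *s u) = c * qf A w u"
  by (simp add: qf_def algebra_simps sum_distrib_left)
lemma scaleR_smult: "c *\<^sub>R (u::complex^'n) = complex_of_real c *s u"
  by (rule vec_eq_iff[THEN iffD2], rule allI, simp only: vector_scaleR_component vector_smult_component, simp add: scaleR_conv_of_real)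
lemma qf_scaleR1: "qf A (c *\<^sub>R u) w = of_real c * qf A u w"
  by (simp add: scaleR_smult qf_smult1)
lemma qf_scaleR2: "qf A w (c *\<^sub>R u) = of_real c * qf A w u"
  by (simp add: scaleR_smult qf_smult2)

lemma sum_delta_mult: "(\<Sum>k\<in>(UNIV::'n::finite set). f k * (if k = j then 1 else 0)) = (f j :: complex)"
proof -
  have "(\<Sum>k\<in>UNIV. f k * (if k = j then 1 else 0)) = (\<Sum>k\<in>UNIV. if k = j then f k else 0)"
    by (intro sum.cong refl) simp
  also have "\<dots> = f j" by (simp add: sum.delta)
  finally show ?thesis .
qed

lemma qf_axis: "qf A (axis i 1) (axis j 1) = A $ i $ j"
proof -
  have "qf A (axis i 1) (axis j 1) = (\<Sum>k\<in>UNIV. if k = i then (\<Sum>l\<in>UNIV. if l = j then A $ k $ l else 0) else 0)"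
    unfolding qf_def axis_def by (intro sum.cong refl) (auto simp: sum_delta_mult)
  also have "\<dots> = A $ i $ j" by (simp add: sum.delta)
  finally show ?thesis .
qed


lemma herm_real_eq: "hermitian_mat A \<Longrightarrow> qf A v v = complex_of_real (Re (qf A v v))"
  using qf_herm_real[of A v] by (simp add: complex_eq_iff)

lemma qf_expand:
  assumes h: "hermitian_mat C"
  shows "Re (qf C (y - z *s x) (y - z *s x)) =
         Re (qf C y y) - 2 * Re (cnj z * qf C x y) + (cmod z)^2 * Re (qf C x x)"
proof -
  define b where "b = qf C x y"
  have yx: "qf C y x = cnj b" unfolding b_def using qf_herm[OF h, of x y] by simp
  have e: "qf C (y - z *s x) (y - z *s x) = qf C y y - z * cnj b - cnj z * b + (cnj z * z) * qf C x x"
    by (simp add: qf_diff1 qf_diff2 qf_smult1 qf_smult2 yx b_def[symmetric] algebra_simps)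
  have zz: "cnj z * z = complex_of_real ((cmod z)^2)"
    by (metis complex_norm_square mult.commute)
  have xx: "qf C x x = complex_of_real (Re (qf C x x))" by (rule herm_real_eq[OF h])
  have r: "Re (z * cnj b) = Re (cnj z * b)" by simp
  show ?thesis unfolding e b_def[symmetric]
    by (subst xx, simp only: zz Re_complex_of_real minus_complex.sel plus_complex.sel r
        of_real_mult[symmetric] Re_complex_of_real) simp
qed

lemma psd_CS:
  assumes p: "psd_mat C"
  shows "(cmod (qf C x y))^2 \<le> Re (qf C x x) * Re (qf C y y)"
proof -
  have h: "hermitian_mat C" and nn: "\<And>v. 0 \<le> Re (qf C v v)" using p by (auto simp: psd_qf)
  define a where "a = Re (qf C x x)"
  define c where "c = Re (qf C y y)"
  define b where "b = qf C x y"
  have key: "\<And>z. 0 \<le> c - 2 * Re (cnj z * b) + (cmod z)^2 * a"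
    using nn qf_expand[OF h] unfolding a_def b_def c_def by metis
  have a0: "0 \<le> a" unfolding a_def by (rule nn)
  show ?thesis
  proof (cases "a = 0")
    case True
    have "b = 0"
    proof (rule ccontr)
      assume bn: "b \<noteq> 0"
      then have bp: "0 < (cmod b)^2" by simp
      define t where "t = (c + 1) / (2 * (cmod b)^2)"
      have "Re (cnj (complex_of_real t * b) * b) = t * (cmod b)^2"
        by (simp add: cmod_power2 algebra_simps power2_eq_square[of "Re b"] power2_eq_square[of "Im b"])
      then have "0 \<le> c - 2 * (t * (cmod b)^2)" using key[of "complex_of_real t * b"] True by simp
      also have "2 * (t * (cmod b)^2) = c + 1" unfolding t_def using bp by (simp add: field_simps)
      finally show False by simp
    qed
    then show ?thesis unfolding b_def[symmetric] a_def[symmetric] c_def[symmetric] using True by simp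
  next
    case False
    then have ap: "0 < a" using a0 by simp
    define z where "z = b / complex_of_real a"
    have cb: "cmod b * cmod b = Re b * Re b + Im b * Im b"
      using cmod_power2[of b] by (simp add: power2_eq_square)
    have "Re (cnj z * b) = (cmod b)^2 / a"
      unfolding z_def using ap cb by (simp add: cmod_power2 field_simps power2_eq_square)
    moreover have "(cmod z)^2 * a = (cmod b)^2 / a"
      unfolding z_def using ap by (simp add: norm_divide power_divide power2_eq_square)
    ultimately have "0 \<le> c - (cmod b)^2 / a" using key[of z] by simp
    then have "(cmod b)^2 / a \<le> c" by simp
    then have "(cmod b)^2 \<le> c * a" using ap by (simp add: divide_le_eq)
    then show ?thesis unfolding b_def[symmetric] a_def[symmetric] c_def[symmetric] by (simp add: mult.commute)
  qed
qed


lemma qf_axis_right: "qf A v (axis k 1) = (\<Sum>i\<in>UNIV. cnj (v $ i) * A $ i $ k)"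
  unfolding qf_def axis_def
  by (intro sum.cong refl) (simp add: sum_delta_mult[where f="\<lambda>j. cnj (v $ _) * A $ _ $ j"])

lemma qf_axis_left: "qf A (axis k 1) v = (\<Sum>j\<in>UNIV. A $ k $ j * v $ j)"
proof -
  have "qf A (axis k 1) v = (\<Sum>i\<in>UNIV. if i = k then (\<Sum>j\<in>UNIV. A $ i $ j * v $ j) else 0)"
    unfolding qf_def axis_def by (intro sum.cong refl) auto
  also have "\<dots> = (\<Sum>j\<in>UNIV. A $ k $ j * v $ j)" by (simp add: sum.delta)
  finally show ?thesis .
qed

lemma psd_diag:
  assumes "psd_mat A" shows "0 \<le> Re (A $ i $ i)" "A $ i $ i = complex_of_real (Re (A $ i $ i))"
proof -
  have "0 \<le> Re (qf A (axis i 1) (axis i 1))" using assms by (simp add: psd_qf)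
  then show "0 \<le> Re (A $ i $ i)" by (simp add: qf_axis)
  show "A $ i $ i = complex_of_real (Re (A $ i $ i))"
    using assms herm_real_eq[of A "axis i 1"] by (simp add: psd_qf qf_axis)
qed

lemma psd_zero_diag:
  assumes "psd_mat A" "A $ i $ i = 0" shows "A $ i $ j = 0"
proof -
  have "(cmod (A $ i $ j))^2 \<le> Re (A $ i $ i) * Re (A $ j $ j)"
    using psd_CS[OF assms(1), of "axis i 1" "axis j 1"] by (simp add: qf_axis)
  then show ?thesis using assms(2) by simp
qed

definition peel :: "complex^'n^'n \<Rightarrow> 'n \<Rightarrow> complex^'n^'n" where
  "peel A k = (\<chi> i j. A $ i $ j - A $ i $ k * A $ k $ j / A $ k $ k)"

lemma tr2_peel:
  assumes h: "hermitian_mat A"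
  shows "tr2 C A = tr2 C (peel A k) + qf C (\<chi> j. A $ j $ k) (\<chi> j. A $ j $ k) / A $ k $ k"
proof -
  have hc: "\<And>i. cnj (A $ i $ k) = A $ k $ i" using h unfolding hermitian_mat_def by (metis complex_cnj_cnj)
  have "qf C (\<chi> j. A $ j $ k) (\<chi> j. A $ j $ k) = (\<Sum>i\<in>UNIV. \<Sum>j\<in>UNIV. C $ i $ j * (A $ j $ k * A $ k $ i))"
    unfolding qf_def by (simp add: hc mult_ac)
  then have "qf C (\<chi> j. A $ j $ k) (\<chi> j. A $ j $ k) / A $ k $ k =
      (\<Sum>i\<in>UNIV. \<Sum>j\<in>UNIV. C $ i $ j * (A $ j $ k * A $ k $ i / A $ k $ k))"
    by (simp add: sum_divide_distrib)
  then show ?thesis unfolding tr2_def peel_def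
    by (simp add: right_diff_distrib sum_subtractf)
qed

lemma peel_herm:
  assumes p: "psd_mat A" shows "hermitian_mat (peel A k)"
proof -
  have hc: "\<And>i j. cnj (A $ i $ j) = A $ j $ i" using p unfolding psd_mat_def hermitian_mat_def by (metis complex_cnj_cnj)
  have r: "cnj (A $ k $ k) = A $ k $ k" using psd_diag(2)[OF p, of k] by (metis complex_cnj_complex_of_real)
  show ?thesis unfolding hermitian_mat_def peel_def
    by (simp add: hc r mult.commute)
qed

lemma peel_psd:
  assumes p: "psd_mat A" and nz: "A $ k $ k \<noteq> 0" shows "psd_mat (peel A k)"
proof -
  have h: "hermitian_mat A" using p by (simp add: psd_mat_def)
  define r where "r = Re (A $ k $ k)"
  have rr: "A $ k $ k = complex_of_real r" unfolding r_def by (rule psd_diag(2)[OF p])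
  have "r \<noteq> 0" using nz rr by auto
  then have rp: "0 < r" using psd_diag(1)[OF p, of k] unfolding r_def by linarith
  have "Re (qf (peel A k) v v) \<ge> 0" for v
  proof -
    define b where "b = qf A v (axis k 1)"
    have b2: "qf A (axis k 1) v = cnj b" unfolding b_def using qf_herm[OF h, of v "axis k 1"] by simp
    have "qf (peel A k) v v = qf A v v - (\<Sum>i\<in>UNIV. \<Sum>j\<in>UNIV. (cnj (v $ i) * A $ i $ k) * (A $ k $ j * v $ j)) / A $ k $ k"
      unfolding qf_def peel_def by (simp add: right_diff_distrib left_diff_distrib sum_subtractf sum_divide_distrib mult_ac)
    also have "(\<Sum>i\<in>UNIV. \<Sum>j\<in>UNIV. (cnj (v $ i) * A $ i $ k) * (A $ k $ j * v $ j)) = qf A v (axis k 1) * qf A (axis k 1) v"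
      unfolding qf_axis_right qf_axis_left by (simp add: sum_product)
    also have "\<dots> = b * cnj b" using b_def b2 by simp
    finally have e: "qf (peel A k) v v = qf A v v - complex_of_real ((cmod b)^2 / r)"
      by (simp add: rr complex_norm_square[symmetric])
    have "(cmod b)^2 \<le> Re (qf A v v) * r"
      using psd_CS[OF p, of v "axis k 1"] unfolding b_def r_def by (simp add: qf_axis)
    then have "(cmod b)^2 / r \<le> Re (qf A v v)" using rp by (simp add: divide_le_eq)
    then show ?thesis unfolding e by simp
  qed
  then show ?thesis using peel_herm[OF p] by (simp add: psd_qf)
qed

lemma peel_diag:
  assumes p: "psd_mat A" and nz: "A $ k $ k \<noteq> 0"
  shows "{i. peel A k $ i $ i \<noteq> 0} \<subseteq> {i. A $ i $ i \<noteq> 0} - {k}"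
proof
  fix i assume "i \<in> {i. peel A k $ i $ i \<noteq> 0}"
  then have a: "peel A k $ i $ i \<noteq> 0" by simp
  have "A $ i $ i \<noteq> 0"
  proof
    assume z: "A $ i $ i = 0"
    then have "A $ i $ k = 0" by (rule psd_zero_diag[OF p])
    then show False using a z by (simp add: peel_def)
  qed
  moreover have "i \<noteq> k" using a nz by (auto simp: peel_def)
  ultimately show "i \<in> {i. A $ i $ i \<noteq> 0} - {k}" by simp
qed

lemma psd_zero: assumes p: "psd_mat A" and d: "{i. A $ i $ i \<noteq> 0} = {}" shows "A = 0"
  using psd_zero_diag[OF p] d by (auto simp: vec_eq_iff)

lemma psd_tr2_nonneg_aux:
  assumes C: "psd_mat C"
  shows "\<forall>A. psd_mat A \<and> card {i. A $ i $ i \<noteq> 0} = n \<longrightarrow> 0 \<le> Re (tr2 C A)"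
proof (induction n rule: less_induct)
  case (less n)
  show ?case
  proof (intro allI impI)
    fix A :: "complex^'a^'a" assume a: "psd_mat A \<and> card {i. A $ i $ i \<noteq> 0} = n"
    then have p: "psd_mat A" by simp
    show "0 \<le> Re (tr2 C A)"
    proof (cases "{i. A $ i $ i \<noteq> 0} = {}")
      case True
      then show ?thesis using psd_zero[OF p] by (simp add: tr2_def)
    next
      case False
      then obtain k where nz: "A $ k $ k \<noteq> 0" by auto
      have "card {i. peel A k $ i $ i \<noteq> 0} \<le> card ({i. A $ i $ i \<noteq> 0} - {k})"
        by (rule card_mono[OF _ peel_diag[OF p nz]]) simp
      also have "\<dots> < n" using a nz card_Diff1_less[of "{i. A $ i $ i \<noteq> 0}" k] by auto
      finally have lt: "card {i. peel A k $ i $ i \<noteq> 0} < n" .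
      have i1: "0 \<le> Re (tr2 C (peel A k))" using less[OF lt] peel_psd[OF p nz] by blast
      define r where "r = Re (A $ k $ k)"
      have rr: "A $ k $ k = complex_of_real r" unfolding r_def by (rule psd_diag(2)[OF p])
      have "r \<noteq> 0" using nz rr by auto
  then have rp: "0 < r" using psd_diag(1)[OF p, of k] unfolding r_def by linarith
      have i2: "0 \<le> Re (qf C (\<chi> j. A $ j $ k) (\<chi> j. A $ j $ k) / A $ k $ k)"
        using C rp by (simp add: rr psd_qf)
      show ?thesis using tr2_peel[of A C k] p i1 i2 by (simp add: psd_mat_def)
    qed
  qed
qed

lemma psd_tr2_nonneg: "psd_mat C \<Longrightarrow> psd_mat A \<Longrightarrow> 0 \<le> Re (tr2 C A)"
  using psd_tr2_nonneg_aux by blast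


lemma norm_axis_c: "norm (axis i (1::complex) :: complex^'n) = 1"
proof -
  have "(norm (axis i (1::complex) :: complex^'n))^2 = (\<Sum>k\<in>UNIV. if k = i then 1 else 0)"
    unfolding norm_sq axis_def by (intro sum.cong refl) auto
  then have "(norm (axis i (1::complex) :: complex^'n))^2 = 1" by (simp add: sum.delta)
  then show ?thesis by (simp add: power2_eq_1_iff)
qed

lemma braket_axis: "i \<noteq> j \<Longrightarrow> braket (axis i (1::complex)) (axis j 1) = 0"
  unfolding braket_def axis_def by (intro sum.neutral) auto

lemma two_idx: assumes "CARD('n) \<ge> 2" obtains i j :: 'n where "i \<noteq> j"
proof -
  obtain i :: 'n where True by simp
  have "\<exists>j. j \<noteq> i"
  proof (rule ccontr)
    assume "\<not> (\<exists>j. j \<noteq> i)"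
    then have "(UNIV :: 'n set) = {i}" by auto
    then have "card (UNIV :: 'n set) = card {i}" by (rule arg_cong)
    then have "CARD('n) = 1" by simp
    with assms show False by simp
  qed
  then show ?thesis using that by blast
qed

lemma linm_herm: assumes "hermitian_mat A" shows "hermitian_mat (linm (complex_of_real a) A (complex_of_real b))"
proof -
  have hc: "\<And>i j. cnj (A $ i $ j) = A $ j $ i" using assms unfolding hermitian_mat_def by (metis complex_cnj_cnj)
  show ?thesis unfolding hermitian_mat_def linm_def by (simp add: hc)
qed

lemma tr2_linm: "tr2 (linm a A b) B = a * tr2 A B + b * trace B"
proof -
  have e: "\<And>i j. (a * A $ i $ j + (if i = j then b else 0)) * B $ j $ i
       = a * (A $ i $ j * B $ j $ i) + (if i = j then b * B $ j $ i else 0)"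
    by (simp add: algebra_simps)
  have "tr2 (linm a A b) B = (\<Sum>i\<in>UNIV. \<Sum>j\<in>UNIV. a * (A $ i $ j * B $ j $ i) + (if i = j then b * B $ j $ i else 0))"
    unfolding tr2_def linm_def by (simp only: vec_lambda_beta e)
  also have "\<dots> = (\<Sum>i\<in>UNIV. a * (\<Sum>j\<in>UNIV. A $ i $ j * B $ j $ i) + b * B $ i $ i)"
    by (simp only: sum.distrib sum_distrib_left[symmetric] sum.delta sum.delta' finite UNIV_I if_True)
  also have "\<dots> = a * tr2 A B + b * trace B"
    by (simp add: tr2_def trace_def sum.distrib sum_distrib_left)
  finally show ?thesis .
qed

lemma qf_zero: "qf A 0 0 = 0" by (simp add: qf_def)

lemma cont_rq: "continuous_on S (\<lambda>v::complex^'n. Re (qf A v v))"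
  unfolding qf_def by (intro continuous_intros)

lemma rq_scale_bound:
  assumes "\<And>u::complex^'n. norm u = 1 \<Longrightarrow> Re (qf A u u) \<le> l"
  shows "Re (qf A v v) \<le> l * (norm v)^2"
proof (cases "v = 0")
  case True then show ?thesis by (simp add: qf_zero)
next
  case False
  then have np: "0 < norm v" by simp
  define u where "u = (1 / norm v) *\<^sub>R v"
  have "norm u = 1" unfolding u_def using np by simp
  then have "Re (qf A u u) \<le> l" by (rule assms)
  moreover have "Re (qf A u u) = Re (qf A v v) / (norm v)^2"
    unfolding u_def qf_scaleR1 qf_scaleR2 by (simp add: power2_eq_square)
  ultimately show ?thesis using np by (simp add: divide_le_eq mult.commute)
qed

lemma rq_scale_bound2:
  assumes "\<And>u::complex^'n. norm u = 1 \<Longrightarrow> l \<le> Re (qf A u u)"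
  shows "l * (norm v)^2 \<le> Re (qf A v v)"
proof (cases "v = 0")
  case True then show ?thesis by (simp add: qf_zero)
next
  case False
  then have np: "0 < norm v" by simp
  define u where "u = (1 / norm v) *\<^sub>R v"
  have "norm u = 1" unfolding u_def using np by simp
  then have "l \<le> Re (qf A u u)" by (rule assms)
  moreover have "Re (qf A u u) = Re (qf A v v) / (norm v)^2"
    unfolding u_def qf_scaleR1 qf_scaleR2 by (simp add: power2_eq_square)
  ultimately show ?thesis using np by (simp add: le_divide_eq mult.commute)
qed

lemma psd_kernel:
  assumes p: "psd_mat C" and z: "Re (qf C v v) = 0" shows "qf C w v = 0"
  using psd_CS[OF p, of w v] z by simp

lemma rayleigh_pair:
  fixes A :: "complex^'n^'n"
  assumes h: "hermitian_mat A" and card: "CARD('n) \<ge> 2"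
  shows "\<exists>\<psi> \<phi>. norm \<psi> = 1 \<and> norm \<phi> = 1 \<and> braket \<psi> \<phi> = 0 \<and>
     (\<forall>\<rho> \<sigma>. \<rho> \<in> density_mats \<longrightarrow> \<sigma> \<in> density_mats \<longrightarrow>
        Re (tr2 A \<rho>) - Re (tr2 A \<sigma>) \<le> Re (qf A \<psi> \<psi>) - Re (qf A \<phi> \<phi>))"
proof -
  obtain i0 j0 :: 'n where ij: "i0 \<noteq> j0" using two_idx[OF card] by blast
  have ne: "sphere (0::complex^'n) 1 \<noteq> {}" using norm_axis_c[of i0] by (metis mem_sphere_0 empty_iff)
  obtain \<psi> where \<psi>S: "\<psi> \<in> sphere (0::complex^'n) 1" and \<psi>max: "\<forall>y\<in>sphere 0 1. Re (qf A y y) \<le> Re (qf A \<psi> \<psi>)"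
    using continuous_attains_sup[OF compact_sphere ne cont_rq] by blast
  obtain xi where xiS: "xi \<in> sphere (0::complex^'n) 1" and ximin: "\<forall>y\<in>sphere 0 1. Re (qf A xi xi) \<le> Re (qf A y y)"
    using continuous_attains_inf[OF compact_sphere ne cont_rq] by blast
  define l where "l = Re (qf A \<psi> \<psi>)"
  define m where "m = Re (qf A xi xi)"
  have n\<psi>: "norm \<psi> = 1" and nxi: "norm xi = 1" using \<psi>S xiS by auto
  have ub: "\<And>v. Re (qf A v v) \<le> l * (norm v)^2"
    by (rule rq_scale_bound) (use \<psi>max in \<open>auto simp: l_def\<close>)
  have lb: "\<And>v. m * (norm v)^2 \<le> Re (qf A v v)"
    by (rule rq_scale_bound2) (use ximin in \<open>auto simp: m_def\<close>)
  define E1 where "E1 = linm (complex_of_real (-1)) A (complex_of_real l)"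
  define E2 where "E2 = linm (complex_of_real 1) A (complex_of_real (-m))"
  have reb: "\<And>v. Re (braket v v) = (norm v)^2" by (simp add: braket_self)
  have q1: "\<And>v w. qf E1 v w = - qf A v w + complex_of_real l * braket v w"
    unfolding E1_def qf_linm by simp
  have q2: "\<And>v w. qf E2 v w = qf A v w - complex_of_real m * braket v w"
    unfolding E2_def qf_linm by simp
  have p1: "psd_mat E1" unfolding psd_qf
  proof
    show "hermitian_mat E1" unfolding E1_def by (rule linm_herm[OF h])
    show "\<forall>v. 0 \<le> Re (qf E1 v v)" using ub by (simp add: q1 reb)
  qed
  have p2: "psd_mat E2" unfolding psd_qf
  proof
    show "hermitian_mat E2" unfolding E2_def by (rule linm_herm[OF h])
    show "\<forall>v. 0 \<le> Re (qf E2 v v)" using lb by (simp add: q2 reb)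
  qed
  have trr: "\<And>\<rho>. \<rho> \<in> density_mats \<Longrightarrow> trace \<rho> = 1 \<and> psd_mat \<rho>" by (simp add: density_mats_def)
  have bnd1: "Re (tr2 A \<rho>) \<le> l" if "\<rho> \<in> density_mats" for \<rho>
    using psd_tr2_nonneg[OF p1, of \<rho>] trr[OF that] unfolding E1_def tr2_linm by simp
  have bnd2: "m \<le> Re (tr2 A \<sigma>)" if "\<sigma> \<in> density_mats" for \<sigma>
    using psd_tr2_nonneg[OF p2, of \<sigma>] trr[OF that] unfolding E2_def tr2_linm by simp
  show ?thesis
  proof (cases "l = m")
    case True
    let ?a = "axis i0 (1::complex) :: complex^'n" and ?b = "axis j0 (1::complex) :: complex^'n"
    have ra: "m \<le> Re (qf A ?a ?a)" and rb: "Re (qf A ?b ?b) \<le> l"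
      using lb[of ?a] ub[of ?b] by (auto simp: norm_axis_c)
    have H: "\<forall>\<rho> \<sigma>. \<rho> \<in> density_mats \<longrightarrow> \<sigma> \<in> density_mats \<longrightarrow>
        Re (tr2 A \<rho>) - Re (tr2 A \<sigma>) \<le> Re (qf A ?a ?a) - Re (qf A ?b ?b)"
      using bnd1 bnd2 ra rb True by fastforce
    have "norm ?a = 1" "norm ?b = 1" by (rule norm_axis_c)+
    then show ?thesis using braket_axis[OF ij] H by blast
  next
    case False
    have z1: "Re (qf E1 \<psi> \<psi>) = 0" using n\<psi> by (simp add: q1 reb l_def)
    have z2: "Re (qf E2 xi xi) = 0" using nxi by (simp add: q2 reb m_def)
    have e1: "qf A xi \<psi> = complex_of_real l * braket xi \<psi>"
      using psd_kernel[OF p1 z1, of xi] by (simp add: q1)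
    have e2: "qf A \<psi> xi = complex_of_real m * braket \<psi> xi"
      using psd_kernel[OF p2 z2, of \<psi>] by (simp add: q2)
    have "qf A xi \<psi> = complex_of_real m * braket xi \<psi>"
      using arg_cong[OF e2, of cnj] by (simp add: qf_herm[OF h] braket_cnj)
    with e1 have "complex_of_real l * braket xi \<psi> = complex_of_real m * braket xi \<psi>"
      by metis
    then have "braket xi \<psi> = 0" using False by auto
    then have o: "braket \<psi> xi = 0" using braket_cnj[of xi \<psi>] by simp
    have H: "\<forall>\<rho> \<sigma>. \<rho> \<in> density_mats \<longrightarrow> \<sigma> \<in> density_mats \<longrightarrow>
        Re (tr2 A \<rho>) - Re (tr2 A \<sigma>) \<le> Re (qf A \<psi> \<psi>) - Re (qf A xi xi)"
      using bnd1 bnd2 unfolding l_def m_def by fastforce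
    show ?thesis using n\<psi> nxi o H by blast
  qed
qed


lemma proj_density:
  assumes n: "norm \<psi> = 1" shows "proj \<psi> \<in> density_mats"
proof -
  have h: "hermitian_mat (proj \<psi>)" unfolding hermitian_mat_def proj_def by (simp add: mult.commute)
  have q: "qf (proj \<psi>) v v = braket v \<psi> * cnj (braket v \<psi>)" for v
  proof -
    have "qf (proj \<psi>) v v = (\<Sum>i\<in>UNIV. \<Sum>j\<in>UNIV. (cnj (v $ i) * \<psi> $ i) * (cnj (\<psi> $ j) * v $ j))"
      unfolding qf_def proj_def by (simp add: mult_ac)
    also have "\<dots> = braket v \<psi> * braket \<psi> v" unfolding braket_def by (simp add: sum_product)
    finally show ?thesis by (simp add: braket_cnj)
  qed
  have "0 \<le> Re (qf (proj \<psi>) v v)" for v unfolding q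
    by (simp add: complex_norm_square[symmetric])
  then have "psd_mat (proj \<psi>)" using h by (simp add: psd_qf)
  moreover have "trace (proj \<psi>) = 1"
  proof -
    have "trace (proj \<psi>) = braket \<psi> \<psi>" unfolding trace_def proj_def braket_def by (simp add: mult.commute)
    then show ?thesis using n by (simp add: braket_self)
  qed
  ultimately show ?thesis by (simp add: density_mats_def)
qed

lemma tr2_proj: "tr2 A (proj \<psi>) = qf A \<psi> \<psi>"
  unfolding tr2_def proj_def qf_def by (simp add: mult_ac)

lemma tr2_diff: "tr2 A (B - C) = tr2 A B - tr2 A C"
  unfolding tr2_def by (simp add: right_diff_distrib sum_subtractf)

lemma herm_diff: "hermitian_mat A \<Longrightarrow> hermitian_mat B \<Longrightarrow> hermitian_mat (A - B)"
proof -
  assume a: "hermitian_mat A" and b: "hermitian_mat B"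
  have ha: "\<And>i j. A $ i $ j = cnj (A $ j $ i)" and hb: "\<And>i j. B $ i $ j = cnj (B $ j $ i)"
    using a b unfolding hermitian_mat_def by blast+
  show ?thesis unfolding hermitian_mat_def
  proof (intro allI)
    fix i j show "(A - B) $ i $ j = cnj ((A - B) $ j $ i)"
      using ha[of i j] hb[of i j] by simp
  qed
qed

lemma tr2_herm_real:
  assumes a: "hermitian_mat A" and b: "hermitian_mat B" shows "Im (tr2 A B) = 0"
proof -
  have ha: "\<And>i j. cnj (A $ i $ j) = A $ j $ i" using a unfolding hermitian_mat_def by (metis complex_cnj_cnj)
  have hb: "\<And>i j. cnj (B $ i $ j) = B $ j $ i" using b unfolding hermitian_mat_def by (metis complex_cnj_cnj)
  have "cnj (tr2 A B) = (\<Sum>i\<in>UNIV. \<Sum>j\<in>UNIV. A $ j $ i * B $ i $ j)"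
    unfolding tr2_def by (simp add: ha hb)
  also have "\<dots> = tr2 A B" unfolding tr2_def by (subst sum.swap) simp
  finally have "cnj (tr2 A B) = tr2 A B" .
  then have "Im (cnj (tr2 A B)) = Im (tr2 A B)" by simp
  then show ?thesis by simp
qed

definition Asum :: "'i set \<Rightarrow> ('i \<Rightarrow> complex^'n^'n) \<Rightarrow> ('i \<Rightarrow> real) \<Rightarrow> complex^'n^'n" where
  "Asum Obs M s = (\<chi> a b. \<Sum>i\<in>Obs. complex_of_real (s i) * M i $ a $ b)"

lemma Asum_herm:
  assumes "\<forall>i\<in>Obs. hermitian_mat (M i)" shows "hermitian_mat (Asum Obs M s)"
proof -
  have h: "\<And>i a b. i \<in> Obs \<Longrightarrow> cnj (M i $ a $ b) = M i $ b $ a"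
    using assms unfolding hermitian_mat_def by (metis complex_cnj_cnj)
  show ?thesis unfolding hermitian_mat_def Asum_def
    by (auto intro!: sum.cong simp: h)
qed

lemma tr2_Asum: "finite Obs \<Longrightarrow> tr2 (Asum Obs M s) K = (\<Sum>i\<in>Obs. complex_of_real (s i) * tr2 (M i) K)"
  unfolding tr2_def Asum_def
  by (simp add: sum_distrib_left sum_distrib_right mult.assoc) (subst sum.swap, rule sum.cong, simp, subst sum.swap, simp)

lemma Re_tr2_Asum_le:
  assumes f: "finite Obs" and s: "s \<in> Obs \<rightarrow>\<^sub>E {-1, 1}"
  shows "Re (tr2 (Asum Obs M s) K) \<le> (\<Sum>i\<in>Obs. cmod (tr2 (M i) K))"
proof -
  have "Re (tr2 (Asum Obs M s) K) = (\<Sum>i\<in>Obs. s i * Re (tr2 (M i) K))"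
    unfolding tr2_Asum[OF f] by (simp add: Re_sum)
  also have "\<dots> \<le> (\<Sum>i\<in>Obs. cmod (tr2 (M i) K))"
  proof (rule sum_mono)
    fix i assume i: "i \<in> Obs"
    have "s i = -1 \<or> s i = 1" using s i by (auto simp: PiE_def Pi_def)
    then have "s i * Re (tr2 (M i) K) \<le> \<bar>Re (tr2 (M i) K)\<bar>" by auto
    also have "\<dots> \<le> cmod (tr2 (M i) K)" by (rule abs_Re_le_cmod)
    finally show "s i * Re (tr2 (M i) K) \<le> cmod (tr2 (M i) K)" .
  qed
  finally show ?thesis .
qed


lemma ex_prod: "(\<exists>a b. Q a b) \<Longrightarrow> \<exists>p. Q (fst p) (snd p)" by auto

theorem mainTheorem7:
  fixes Obs :: "'i set" and M :: "'i \<Rightarrow> complex^'n^'n"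
  assumes "CARD('n) \<ge> 2"
    and "is_POVM Obs M"
  shows "(\<exists>\<psi> \<phi> :: complex^'n. norm \<psi> = 1 \<and> norm \<phi> = 1 \<and> braket \<psi> \<phi> = 0 \<and>
            (\<Sum>i\<in>Obs. cmod (trace (M i ** (proj \<psi> - proj \<phi>)))) = 2 * Kstar Obs M)
       \<and> (\<forall>\<psi> \<phi> :: complex^'n. norm \<psi> = 1 \<and> norm \<phi> = 1 \<and> braket \<psi> \<phi> = 0 \<longrightarrow>
            (\<Sum>i\<in>Obs. cmod (trace (M i ** (proj \<psi> - proj \<phi>)))) \<le> 2 * Kstar Obs M)"
proof -
  have fin: "finite Obs" using assms(2) by (simp add: is_POVM_def)
  have hM: "\<forall>i\<in>Obs. hermitian_mat (M i)" using assms(2) by (simp add: is_POVM_def psd_mat_def)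
  define S where "S = Obs \<rightarrow>\<^sub>E {-1::real, 1}"
  have finS: "finite S" unfolding S_def using fin by (intro finite_PiE) auto
  have neS: "S \<noteq> {}" unfolding S_def by (simp add: PiE_eq_empty_iff)
  define D where "D = (density_mats :: (complex^'n^'n) set)"
  define g where "g = (\<lambda>\<psi> \<phi> :: complex^'n. \<Sum>i\<in>Obs. cmod (trace (M i ** (proj \<psi> - proj \<phi>))))"
  define F where "F = (\<lambda>p :: (complex^'n^'n) \<times> (complex^'n^'n). (1/2) * (\<Sum>i\<in>Obs. cmod (trace (M i ** (fst p - snd p)))))"
  have K: "Kstar Obs M = (SUP p \<in> D \<times> D. F p)" unfolding Kstar_def F_def D_def ..
  have ex: "\<forall>s\<in>S. \<exists>p. norm (fst p) = 1 \<and> norm (snd p) = 1 \<and> braket (fst p) (snd p) = 0 \<and>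
     (\<forall>\<rho> \<sigma>. \<rho> \<in> D \<longrightarrow> \<sigma> \<in> D \<longrightarrow>
        Re (tr2 (Asum Obs M s) \<rho>) - Re (tr2 (Asum Obs M s) \<sigma>) \<le>
        Re (qf (Asum Obs M s) (fst p) (fst p)) - Re (qf (Asum Obs M s) (snd p) (snd p)))"
    unfolding D_def
    by (intro ballI ex_prod rayleigh_pair[OF Asum_herm[OF hM] assms(1)])
  then obtain P where P: "\<forall>s\<in>S. norm (fst (P s)) = 1 \<and> norm (snd (P s)) = 1 \<and> braket (fst (P s)) (snd (P s)) = 0 \<and>
     (\<forall>\<rho> \<sigma>. \<rho> \<in> D \<longrightarrow> \<sigma> \<in> D \<longrightarrow>
        Re (tr2 (Asum Obs M s) \<rho>) - Re (tr2 (Asum Obs M s) \<sigma>) \<le>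
        Re (qf (Asum Obs M s) (fst (P s)) (fst (P s))) - Re (qf (Asum Obs M s) (snd (P s)) (snd (P s))))"
    by (rule bchoice[THEN exE]) blast
  define G where "G = (\<lambda>s. g (fst (P s)) (snd (P s)))"
  have gP: "Re (qf (Asum Obs M s) (fst (P s)) (fst (P s))) - Re (qf (Asum Obs M s) (snd (P s)) (snd (P s))) \<le> G s"
    if "s \<in> S" for s
  proof -
    have "Re (qf (Asum Obs M s) (fst (P s)) (fst (P s))) - Re (qf (Asum Obs M s) (snd (P s)) (snd (P s)))
        = Re (tr2 (Asum Obs M s) (proj (fst (P s)) - proj (snd (P s))))"
      by (simp add: tr2_diff tr2_proj)
    also have "\<dots> \<le> G s" unfolding G_def g_def trace_tr2
      using Re_tr2_Asum_le[OF fin] that unfolding S_def by blast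
    finally show ?thesis .
  qed
  define m where "m = Max (G ` S)"
  have "m \<in> G ` S" unfolding m_def using finS neS by (intro Max_in) auto
  then obtain s0 where s0: "s0 \<in> S" "G s0 = m" by auto
  have Gm: "G s \<le> m" if "s \<in> S" for s unfolding m_def using finS that by simp
  have Fb: "F p \<le> m / 2" if pD: "p \<in> D \<times> D" for p
  proof -
    obtain \<rho> \<sigma> where p: "p = (\<rho>, \<sigma>)" and \<rho>: "\<rho> \<in> D" and \<sigma>: "\<sigma> \<in> D" using pD by (cases p) auto
    have h\<rho>: "hermitian_mat \<rho>" and h\<sigma>: "hermitian_mat \<sigma>"
      using \<rho> \<sigma> by (auto simp: D_def density_mats_def psd_mat_def)
    define sg where "sg = restrict (\<lambda>i. if 0 \<le> Re (tr2 (M i) (\<rho> - \<sigma>)) then 1 else (-1::real)) Obs"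
    have sgS: "sg \<in> S" unfolding sg_def S_def by auto
    have "(\<Sum>i\<in>Obs. cmod (trace (M i ** (\<rho> - \<sigma>)))) = (\<Sum>i\<in>Obs. sg i * Re (tr2 (M i) (\<rho> - \<sigma>)))"
    proof (rule sum.cong[OF refl])
      fix i assume i: "i \<in> Obs"
      have "Im (tr2 (M i) (\<rho> - \<sigma>)) = 0"
        by (rule tr2_herm_real) (use hM i herm_diff[OF h\<rho> h\<sigma>] in auto)
      then have "cmod (tr2 (M i) (\<rho> - \<sigma>)) = \<bar>Re (tr2 (M i) (\<rho> - \<sigma>))\<bar>" by (simp add: cmod_eq_Re)
      then show "cmod (trace (M i ** (\<rho> - \<sigma>))) = sg i * Re (tr2 (M i) (\<rho> - \<sigma>))"
        unfolding trace_tr2 sg_def using i by auto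
    qed
    also have "\<dots> = Re (tr2 (Asum Obs M sg) (\<rho> - \<sigma>))"
      unfolding tr2_Asum[OF fin] by (simp add: Re_sum)
    also have "\<dots> = Re (tr2 (Asum Obs M sg) \<rho>) - Re (tr2 (Asum Obs M sg) \<sigma>)" by (simp add: tr2_diff)
    also have "\<dots> \<le> Re (qf (Asum Obs M sg) (fst (P sg)) (fst (P sg))) - Re (qf (Asum Obs M sg) (snd (P sg)) (snd (P sg)))"
      using P sgS \<rho> \<sigma> by blast
    also have "\<dots> \<le> G sg" by (rule gP[OF sgS])
    also have "\<dots> \<le> m" by (rule Gm[OF sgS])
    finally show ?thesis unfolding F_def p by simp
  qed
  obtain i0 j0 :: 'n where "i0 \<noteq> j0" using two_idx[OF assms(1)] by blast
  have neD: "D \<times> D \<noteq> {}" using proj_density[OF norm_axis_c[of i0]] unfolding D_def by blast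
  have bdd: "bdd_above (F ` (D \<times> D))" using Fb by (intro bdd_aboveI2) 
  have Kle: "Kstar Obs M \<le> m / 2" unfolding K by (rule cSUP_least[OF neD Fb])
  have gle: "g \<psi> \<phi> \<le> 2 * Kstar Obs M" if "norm \<psi> = 1" "norm \<phi> = 1" for \<psi> \<phi>
  proof -
    have "(proj \<psi>, proj \<phi>) \<in> D \<times> D" using proj_density that unfolding D_def by blast
    then have "F (proj \<psi>, proj \<phi>) \<le> Kstar Obs M" unfolding K by (rule cSUP_upper[OF _ bdd])
    then show ?thesis unfolding F_def g_def by simp
  qed
  have P0: "norm (fst (P s0)) = 1" "norm (snd (P s0)) = 1" "braket (fst (P s0)) (snd (P s0)) = 0"
    using P s0(1) by auto
  have "G s0 = 2 * Kstar Obs M"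
    using gle[OF P0(1,2)] Kle s0(2) unfolding G_def by linarith
  then have part1: "\<exists>\<psi> \<phi> :: complex^'n. norm \<psi> = 1 \<and> norm \<phi> = 1 \<and> braket \<psi> \<phi> = 0 \<and> g \<psi> \<phi> = 2 * Kstar Obs M"
    using P0 unfolding G_def by blast
  show ?thesis using part1 gle unfolding g_def by blast
qed

end
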